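(* Let $G$ be a sufficiently large abelian group of order $n$ with $G\not\cong\mathbb{Z}_2^m$ and $G\not\cong\mathbb{Z}_2^m\times\mathbb{Z}_4$ (for any $m$). Then there are $n/100$ pairwise disjoint triples $\{x,y,z\}$ of distinct non-involutions of $G$ with $x+y+z=0$.
   Context: A non-involution is an element $x\in G$ with $x\neq -x$ (i.e. $2x\neq 0$). "Sufficiently large" means there is $n_0$ such that the statement holds for all such groups of order at least $n_0$. *)

theory Defs
  imports "HOL-Algebra.Algebra"
begin

definition Z2pow :: "nat \<Rightarrow> (nat \<Rightarrow> int) monoid" where
  "Z2pow m = product_group {..<m} (\<lambda>_. integer_mod_group 2)"

definition Z2pow_Z4 :: "nat \<Rightarrow> ((nat \<Rightarrow> int) \<times> int) monoid" where
  "Z2pow_Z4 m = Z2pow m \<times>\<times> integer_mod_group 4"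

(* non-involution (in multiplicative notation of HOL-Algebra): x \<noteq> x^{-1}, i.e. x x \<noteq> 1 *)
definition non_involution :: "('a, 'b) monoid_scheme \<Rightarrow> 'a \<Rightarrow> bool" where
  "non_involution G x \<longleftrightarrow> x \<in> carrier G \<and> x \<otimes>\<^bsub>G\<^esub> x \<noteq> \<one>\<^bsub>G\<^esub>"

end

theory Submission
  imports Defs
begin

definition Fs :: "('a,'b) monoid_scheme \<Rightarrow> nat \<Rightarrow> (nat \<Rightarrow> 'a) \<Rightarrow> (nat \<Rightarrow> int) \<Rightarrow> 'a" where
  "Fs G m g v = finprod G (\<lambda>i. g i [^]\<^bsub>G\<^esub> v i) {..<m}"

context comm_group begin

lemma pow_mod2:
  assumes x: "x \<in> carrier G" and e: "x \<otimes> x = \<one>"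
  shows "x [^] ((a::int) mod 2) = x [^] a"
proof -
  have x2: "x [^] (2::int) = \<one>"
    using x e by (metis int_pow_1 int_pow_mult one_add_one)
  have "x [^] a = x [^] (2 * (a div 2) + a mod 2)" by simp
  also have "\<dots> = x [^] (2 * (a div 2)) \<otimes> x [^] (a mod 2)"
    using x by (rule int_pow_mult)
  also have "\<dots> = (x [^] (2::int)) [^] (a div 2) \<otimes> x [^] (a mod 2)"
    using x by (simp add: int_pow_pow)
  also have "\<dots> = x [^] (a mod 2)" using x2 x by simp
  finally show ?thesis by simp
qed

lemma Fs_closed: "(\<And>i. i < m \<Longrightarrow> g i \<in> carrier G) \<Longrightarrow> Fs G m g v \<in> carrier G"
  unfolding Fs_def by (intro finprod_closed) auto

lemma Fs_Suc: "(\<And>i. i < Suc m \<Longrightarrow> g i \<in> carrier G) \<Longrightarrow> Fs G (Suc m) g v = Fs G m g v \<otimes> g m [^] v m"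
proof -
  assume a: "\<And>i. i < Suc m \<Longrightarrow> g i \<in> carrier G"
  have "Fs G (Suc m) g v = g m [^] v m \<otimes> Fs G m g v"
    unfolding Fs_def lessThan_Suc using a by (subst finprod_insert) auto
  then show ?thesis using a by (simp add: m_comm Fs_closed)
qed

lemma Fs_cong: "(\<And>i. i < m \<Longrightarrow> g' i \<in> carrier G) \<Longrightarrow> (\<And>i. i < m \<Longrightarrow> g i = g' i) \<Longrightarrow> (\<And>i. i < m \<Longrightarrow> v i = v' i) \<Longrightarrow> Fs G m g v = Fs G m g' v'"
  unfolding Fs_def by (intro finprod_cong') auto

lemma Fs_0[simp]: "Fs G 0 g v = \<one>" unfolding Fs_def by simp

lemma Fs_in:
  assumes "subgroup H G" "\<And>i. i < m \<Longrightarrow> g i \<in> H"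
  shows "Fs G m g v \<in> H"
  using assms(2)
proof (induction m)
  case 0 then show ?case using assms(1) subgroup.one_closed by simp
next
  case (Suc m)
  have gc: "\<And>i. i < Suc m \<Longrightarrow> g i \<in> carrier G" using Suc.prems assms(1) subgroup.subset by blast
  have "g m [^] v m \<in> H"
    using Suc.prems assms(1) by (simp add: subgroup_int_pow_closed)
  then show ?case using Fs_Suc[OF gc] Suc assms(1) by (simp add: subgroup.m_closed)
qed

lemma Fs_add:
  assumes "\<And>i. i < m \<Longrightarrow> g i \<in> carrier G \<and> g i \<otimes> g i = \<one>"
  shows "Fs G m g (\<lambda>i. (v i + w i) mod 2) = Fs G m g v \<otimes> Fs G m g w"
proof -
  have "Fs G m g (\<lambda>i. (v i + w i) mod 2) = finprod G (\<lambda>i. g i [^] v i \<otimes> g i [^] w i) {..<m}"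
    unfolding Fs_def using assms by (intro finprod_cong') (auto simp: pow_mod2 int_pow_mult)
  also have "\<dots> = Fs G m g v \<otimes> Fs G m g w"
    unfolding Fs_def using assms by (intro finprod_multf) auto
  finally show ?thesis .
qed


definition indep where
  "indep H K m g \<longleftrightarrow> (\<forall>i<m. g i \<in> H) \<and>
     (\<forall>v. (\<forall>i<m. v i \<in> {0,1}) \<longrightarrow> Fs G m g v \<in> K \<longrightarrow> (\<forall>i<m. v i = (0::int)))"

lemma mod2_01: "(a::int) mod 2 \<in> {0,1}"
proof -
  have "0 \<le> a mod 2" "a mod 2 < 2" by simp_all
  then show ?thesis by auto
qed

lemma mod2_eq: "(a::int) \<in> {0,1} \<Longrightarrow> b \<in> {0,1} \<Longrightarrow> (a+b) mod 2 = 0 \<Longrightarrow> a = b"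
  by auto

lemma indep_bound:
  assumes fin: "finite H" and sub: "subgroup H G" and el: "\<forall>x\<in>H. x \<otimes> x = \<one>" and K: "\<one> \<in> K"
    and P: "indep H K m g"
  shows "2^m \<le> card H"
proof -
  have gH: "\<And>i. i < m \<Longrightarrow> g i \<in> H" using P unfolding indep_def by auto
  have gc: "\<And>i. i < m \<Longrightarrow> g i \<in> carrier G \<and> g i \<otimes> g i = \<one>"
    using gH el subgroup.mem_carrier[OF sub] by blast
  let ?V = "PiE {..<m} (\<lambda>_. {0::int,1})"
  have inj: "inj_on (Fs G m g) ?V"
  proof (rule inj_onI)
    fix v w assume v: "v \<in> ?V" and w: "w \<in> ?V" and eq: "Fs G m g v = Fs G m g w"
    have FH: "Fs G m g v \<in> H" by (rule Fs_in[OF sub gH])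
    have "Fs G m g (\<lambda>i. (v i + w i) mod 2) = Fs G m g v \<otimes> Fs G m g w"
      using gc by (rule Fs_add)
    also have "\<dots> = \<one>" using eq el FH by simp
    finally have inK: "Fs G m g (\<lambda>i. (v i + w i) mod 2) \<in> K" using K by simp
    have m01: "\<forall>i<m. (v i + w i) mod 2 \<in> {0,1}" using mod2_01 by blast
    have ind: "\<And>u. (\<forall>i<m. u i \<in> {0,1}) \<Longrightarrow> Fs G m g u \<in> K \<Longrightarrow> (\<forall>i<m. u i = (0::int))"
      using P unfolding indep_def by blast
    have z: "\<forall>i<m. (v i + w i) mod 2 = 0"
      using ind[of "\<lambda>i. (v i + w i) mod 2"] m01 inK by blast
    show "v = w"
    proof (rule ext)
      fix i show "v i = w i"
      proof (cases "i < m")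
        case True
        then have "v i \<in> {0,1}" "w i \<in> {0,1}" using PiE_mem[OF v] PiE_mem[OF w] by auto
        moreover have "(v i + w i) mod 2 = 0" using z True by blast
        ultimately show ?thesis by (rule mod2_eq)
      next
        case False
        then show ?thesis using PiE_arb[OF v] PiE_arb[OF w] by simp
      qed
    qed
  qed
  have img: "Fs G m g ` ?V \<subseteq> H" using Fs_in[OF sub gH] by auto
  have "card ?V = 2^m" by (simp add: card_PiE numeral_2_eq_2)
  then show ?thesis using card_inj_on_le[OF inj img fin] by simp
qed

lemma basis_exists:
  assumes fin: "finite H" and sub: "subgroup H G" and el: "\<forall>x\<in>H. x \<otimes> x = \<one>"
    and K: "\<one> \<in> K" "K \<subseteq> H"
  shows "\<exists>m g. indep H K m g \<and>
     (\<forall>h\<in>H. \<exists>v k. (\<forall>i<m. v i \<in> {0,1}) \<and> k \<in> K \<and> h = Fs G m g v \<otimes> k)"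
proof -
  define M where "M = {m. \<exists>g. indep H K m g}"
  have "M \<subseteq> {..<card H}"
  proof
    fix m assume "m \<in> M"
    then obtain g where "indep H K m g" unfolding M_def by auto
    then have "2^m \<le> card H" using indep_bound assms by blast
    moreover have "m < 2^m" by simp
    ultimately have "m < card H" by linarith
    then show "m \<in> {..<card H}" by simp
  qed
  then have finM: "finite M" using finite_subset by blast
  have "0 \<in> M" unfolding M_def indep_def by auto
  define m0 where "m0 = Max M"
  have "m0 \<in> M" unfolding m0_def using finM \<open>0 \<in> M\<close> Max_in by blast
  then obtain g where P: "indep H K m0 g" unfolding M_def by auto
  have gH: "\<And>i. i < m0 \<Longrightarrow> g i \<in> H" using P unfolding indep_def by auto
  have Hc: "H \<subseteq> carrier G" using sub subgroup.subset by blast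
  have Kc: "K \<subseteq> carrier G" using K Hc by blast
  have span: "\<forall>h\<in>H. \<exists>v k. (\<forall>i<m0. v i \<in> {0,1}) \<and> k \<in> K \<and> h = Fs G m0 g v \<otimes> k"
  proof (rule ccontr)
    assume "\<not> ?thesis"
    then obtain h where hH: "h \<in> H" and nrep: "\<And>v k. (\<forall>i<m0. v i \<in> {0,1}) \<Longrightarrow> k \<in> K \<Longrightarrow> h \<noteq> Fs G m0 g v \<otimes> k"
      by blast
    define g' where "g' = g(m0 := h)"
    have g'H: "\<And>i. i < Suc m0 \<Longrightarrow> g' i \<in> H" using gH hH unfolding g'_def by auto
    have g'c: "\<And>i. i < Suc m0 \<Longrightarrow> g' i \<in> carrier G" using g'H Hc by blast
    have "indep H K (Suc m0) g'"
      unfolding indep_def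
    proof (intro conjI allI impI)
      show "\<And>i. i < Suc m0 \<Longrightarrow> g' i \<in> H" by (rule g'H)
      fix v :: "nat \<Rightarrow> int" and i
      assume v01: "\<forall>i<Suc m0. v i \<in> {0,1}" and inK: "Fs G (Suc m0) g' v \<in> K" and i: "i < Suc m0"
      have eqF: "Fs G m0 g' v = Fs G m0 g v"
        using gH Hc by (intro Fs_cong) (auto simp: g'_def)
      have Fc: "Fs G m0 g v \<in> H" using Fs_in[OF sub gH] .
      have Fcc: "Fs G m0 g v \<in> carrier G" using Fc Hc by blast
      have hc: "h \<in> carrier G" using hH Hc by blast
      have decomp: "Fs G (Suc m0) g' v = Fs G m0 g v \<otimes> h [^] v m0"
        using Fs_Suc[of m0 g' v, OF g'c] eqF by (simp add: g'_def)
      have vm0: "v m0 = 0"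
      proof (rule ccontr)
        assume "v m0 \<noteq> 0"
        then have "v m0 = 1" using v01 by auto
        then have k: "Fs G m0 g v \<otimes> h \<in> K" using inK decomp hc by simp
        have "Fs G m0 g v \<otimes> (Fs G m0 g v \<otimes> h) = (Fs G m0 g v \<otimes> Fs G m0 g v) \<otimes> h"
          using Fcc hc by (simp add: m_assoc)
        also have "\<dots> = h" using el Fc hc by simp
        finally have "h = Fs G m0 g v \<otimes> (Fs G m0 g v \<otimes> h)" by simp
        moreover have "\<forall>i<m0. v i \<in> {0,1}" using v01 by simp
        ultimately show False using nrep k by blast
      qed
      then have "Fs G m0 g v \<in> K" using inK decomp Fcc by simp
      then have "\<forall>i<m0. v i = 0" using P v01 unfolding indep_def by auto
      then show "v i = 0" using vm0 i by (cases "i = m0") auto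
    qed
    then have "Suc m0 \<in> M" unfolding M_def by blast
    then have "Suc m0 \<le> m0" unfolding m0_def using finM by simp
    then show False by simp
  qed
  show ?thesis using P span by blast
qed


lemma indep_eq:
  assumes sub: "subgroup H G" and el: "\<forall>x\<in>H. x \<otimes> x = \<one>" and K: "\<one> \<in> K"
    and P: "indep H K m g" and v: "\<forall>i<m. v i \<in> {0,1}" and w: "\<forall>i<m. w i \<in> {0,1}"
    and eq: "Fs G m g v = Fs G m g w"
  shows "\<forall>i<m. v i = w i"
proof -
  have gH: "\<And>i. i < m \<Longrightarrow> g i \<in> H" using P unfolding indep_def by auto
  have gc: "\<And>i. i < m \<Longrightarrow> g i \<in> carrier G \<and> g i \<otimes> g i = \<one>"
    using gH el subgroup.mem_carrier[OF sub] by blast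
  have FH: "Fs G m g v \<in> H" by (rule Fs_in[OF sub gH])
  have "Fs G m g (\<lambda>i. (v i + w i) mod 2) = Fs G m g v \<otimes> Fs G m g w"
    using gc by (rule Fs_add)
  also have "\<dots> = \<one>" using eq el FH by simp
  finally have inK: "Fs G m g (\<lambda>i. (v i + w i) mod 2) \<in> K" using K by simp
  have m01: "\<forall>i<m. (v i + w i) mod 2 \<in> {0,1}" using mod2_01 by blast
  have ind: "\<And>u. (\<forall>i<m. u i \<in> {0,1}) \<Longrightarrow> Fs G m g u \<in> K \<Longrightarrow> (\<forall>i<m. u i = (0::int))"
    using P unfolding indep_def by blast
  have z: "\<forall>i<m. (v i + w i) mod 2 = 0"
    using ind[of "\<lambda>i. (v i + w i) mod 2"] m01 inK by blast
  show ?thesis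
  proof (intro allI impI)
    fix i assume i: "i < m"
    then have "v i \<in> {0,1}" "w i \<in> {0,1}" using v w by auto
    moreover have "(v i + w i) mod 2 = 0" using z i by blast
    ultimately show "v i = w i" by (rule mod2_eq)
  qed
qed

lemma elem_iso:
  assumes fin: "finite (carrier G)" and el: "\<forall>x\<in>carrier G. x \<otimes> x = \<one>"
  shows "\<exists>m. G \<cong> Z2pow m"
proof -
  have K1: "\<one> \<in> {\<one>}" "{\<one>} \<subseteq> carrier G" by auto
  obtain m g where P: "indep (carrier G) {\<one>} m g"
    and span: "\<forall>h\<in>carrier G. \<exists>v k. (\<forall>i<m. v i \<in> {0,1}) \<and> k \<in> {\<one>} \<and> h = Fs G m g v \<otimes> k"
    using basis_exists[OF fin subgroup_self el K1] by blast
  have gc: "\<And>i. i < m \<Longrightarrow> g i \<in> carrier G" using P unfolding indep_def by auto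
  have grp: "group (Z2pow m)" unfolding Z2pow_def by (intro product_group) simp
  have i01: "{0..<2::int} = {0,1}" by auto
  have carZ: "carrier (Z2pow m) = PiE {..<m} (\<lambda>_. {0,1})"
    unfolding Z2pow_def by (simp add: carrier_integer_mod_group i01)
  have mulZ: "x \<otimes>\<^bsub>Z2pow m\<^esub> y = (\<lambda>i\<in>{..<m}. (x i + y i) mod 2)" for x y
    unfolding Z2pow_def by simp
  have c01: "\<forall>i<m. v i \<in> {0,1}" if "v \<in> carrier (Z2pow m)" for v
    using PiE_mem[OF that[unfolded carZ]] by blast
  have hom: "Fs G m g \<in> hom (Z2pow m) G"
  proof (rule homI)
    fix x assume "x \<in> carrier (Z2pow m)" then show "Fs G m g x \<in> carrier G" using Fs_closed gc by blast
  next
    fix x y assume x: "x \<in> carrier (Z2pow m)" and y: "y \<in> carrier (Z2pow m)"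
    have "Fs G m g (x \<otimes>\<^bsub>Z2pow m\<^esub> y) = Fs G m g (\<lambda>i. (x i + y i) mod 2)"
      unfolding mulZ using gc by (intro Fs_cong) auto
    also have "\<dots> = Fs G m g x \<otimes> Fs G m g y"
      using gc el by (intro Fs_add) auto
    finally show "Fs G m g (x \<otimes>\<^bsub>Z2pow m\<^esub> y) = Fs G m g x \<otimes> Fs G m g y" .
  qed
  have inj: "inj_on (Fs G m g) (carrier (Z2pow m))"
  proof (rule inj_onI)
    fix v w assume v: "v \<in> carrier (Z2pow m)" and w: "w \<in> carrier (Z2pow m)" and eq: "Fs G m g v = Fs G m g w"
    have z: "\<forall>i<m. v i = w i" using indep_eq[OF subgroup_self el K1(1) P c01[OF v] c01[OF w] eq] .
    show "v = w"
    proof (rule ext)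
      fix i show "v i = w i"
      proof (cases "i < m")
        case True then show ?thesis using z by blast
      next
        case False
        then show ?thesis using PiE_arb[OF v[unfolded carZ]] PiE_arb[OF w[unfolded carZ]] by simp
      qed
    qed
  qed
  have surj: "carrier G \<subseteq> Fs G m g ` carrier (Z2pow m)"
  proof
    fix h assume hc: "h \<in> carrier G"
    then obtain v k where v: "\<forall>i<m. v i \<in> {0,1}" and k: "k \<in> {\<one>}" and hv: "h = Fs G m g v \<otimes> k"
      using span by blast
    have hv': "h = Fs G m g v" using hv k Fs_closed[OF gc] by simp
    have "restrict v {..<m} \<in> carrier (Z2pow m)" unfolding carZ using v by auto
    moreover have "Fs G m g (restrict v {..<m}) = h" unfolding hv' using gc by (intro Fs_cong) auto
    ultimately show "h \<in> Fs G m g ` carrier (Z2pow m)" by (metis image_eqI)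
  qed
  have "Fs G m g ` carrier (Z2pow m) \<subseteq> carrier G" using Fs_closed gc by blast
  then have "Fs G m g \<in> iso (Z2pow m) G"
    unfolding iso_iff using hom inj surj by blast
  then have "Z2pow m \<cong> G" by (rule is_isoI)
  then have "G \<cong> Z2pow m" using group.iso_sym[OF grp] by blast
  then show ?thesis by blast
qed

lemma pow_mod4:
  assumes x: "x \<in> carrier G" and e: "x [^] (4::int) = \<one>"
  shows "x [^] ((a::int) mod 4) = x [^] a"
proof -
  have "x [^] a = x [^] (4 * (a div 4) + a mod 4)" by simp
  also have "\<dots> = x [^] (4 * (a div 4)) \<otimes> x [^] (a mod 4)"
    using x by (rule int_pow_mult)
  also have "\<dots> = (x [^] (4::int)) [^] (a div 4) \<otimes> x [^] (a mod 4)"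
    using x by (simp add: int_pow_pow)
  also have "\<dots> = x [^] (a mod 4)" using e x by simp
  finally show ?thesis by simp
qed

lemma invs_subgroup: "subgroup {x \<in> carrier G. x \<otimes> x = \<one>} G"
proof (rule subgroupI)
  fix x y assume x: "x \<in> {x \<in> carrier G. x \<otimes> x = \<one>}" and y: "y \<in> {x \<in> carrier G. x \<otimes> x = \<one>}"
  have "(x \<otimes> y) \<otimes> (x \<otimes> y) = (x \<otimes> x) \<otimes> (y \<otimes> y)" using x y by (simp add: m_ac)
  then show "x \<otimes> y \<in> {x \<in> carrier G. x \<otimes> x = \<one>}" using x y by simp
next
  fix x assume x: "x \<in> {x \<in> carrier G. x \<otimes> x = \<one>}"
  then have xc: "x \<in> carrier G" and xx: "x \<otimes> x = \<one>" by auto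
  have "inv x \<otimes> inv x = inv (x \<otimes> x)" using xc by (simp add: inv_mult)
  also have "inv (x \<otimes> x) = \<one>" by (simp only: xx inv_one)
  finally show "inv x \<in> {x \<in> carrier G. x \<otimes> x = \<one>}" using xc by simp
qed auto


lemma z4_iso:
  assumes fin: "finite (carrier G)" and Hdef: "H = {x \<in> carrier G. x \<otimes> x = \<one>}"
    and ix: "2 * card H = order G"
  shows "\<exists>m. G \<cong> Z2pow_Z4 m"
proof -
  have sub: "subgroup H G" unfolding Hdef by (rule invs_subgroup)
  have Hc: "H \<subseteq> carrier G" using sub subgroup.subset by blast
  have el: "\<forall>x\<in>H. x \<otimes> x = \<one>" unfolding Hdef by auto
  have finH: "finite H" using fin Hc finite_subset by blast
  have "\<one> \<in> H" using sub subgroup.one_closed by blast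
  then have cH: "card H > 0" using finH card_gt_0_iff by blast
  have cdiff: "card (carrier G - H) = card H"
    using ix Hc finH card_Diff_subset[OF finH Hc] unfolding order_def by simp
  have "carrier G - H \<noteq> {}"
  proof
    assume "carrier G - H = {}"
    then have "card H = 0" using cdiff by (metis card.empty)
    then show False using cH by simp
  qed
  then obtain g0 where g0c: "g0 \<in> carrier G" and g0H: "g0 \<notin> H" by blast
  define C where "C = (\<lambda>y. g0 \<otimes> y) ` H"
  have CsubD: "C \<subseteq> carrier G - H"
  proof
    fix c assume "c \<in> C"
    then obtain y where y: "y \<in> H" and c: "c = g0 \<otimes> y" unfolding C_def by blast
    have yc: "y \<in> carrier G" using y Hc by blast
    have "c \<notin> H"
    proof
      assume "c \<in> H"
      then have "c \<otimes> inv y \<in> H" using y sub by (simp add: subgroup.m_closed subgroup.m_inv_closed)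
      moreover have "c \<otimes> inv y = g0" using c yc g0c by (simp add: m_assoc)
      ultimately show False using g0H by simp
    qed
    then show "c \<in> carrier G - H" using c yc g0c by simp
  qed
  have "card C = card H" unfolding C_def
    by (rule card_image) (meson Hc g0c inj_on_cmult inj_on_subset)
  then have Ceq: "C = carrier G - H" using CsubD cdiff fin by (intro card_subset_eq) auto
  define t where "t = g0 \<otimes> g0"
  have tc: "t \<in> carrier G" unfolding t_def using g0c by simp
  have tH: "t \<in> H"
  proof (rule ccontr)
    assume "t \<notin> H"
    then have "t \<in> C" using Ceq tc by simp
    then obtain y where y: "y \<in> H" and "g0 \<otimes> g0 = g0 \<otimes> y" unfolding C_def t_def by blast
    then have "g0 = y" using g0c Hc by (meson l_cancel subsetD)
    then show False using y g0H by simp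
  qed
  have t1: "t \<noteq> \<one>" using g0H g0c unfolding Hdef t_def by simp
  have tt: "t \<otimes> t = \<one>" using tH el by simp
  define K where "K = {\<one>, t}"
  have K: "\<one> \<in> K" "K \<subseteq> H" unfolding K_def using tH \<open>\<one> \<in> H\<close> by auto
  obtain m g where P: "indep H K m g"
    and span: "\<forall>h\<in>H. \<exists>v k. (\<forall>i<m. v i \<in> {0,1}) \<and> k \<in> K \<and> h = Fs G m g v \<otimes> k"
    using basis_exists[OF finH sub el K] by auto
  have gH: "\<And>i. i < m \<Longrightarrow> g i \<in> H" using P unfolding indep_def by auto
  have gc: "\<And>i. i < m \<Longrightarrow> g i \<in> carrier G" using gH Hc by blast
  have p2: "g0 [^] (2::int) = t" using g0c unfolding t_def by (metis int_pow_1 int_pow_mult one_add_one)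
  have p4: "g0 [^] (4::int) = \<one>"
  proof -
    have "g0 [^] (4::int) = g0 [^] (2::int) \<otimes> g0 [^] (2::int)" using g0c int_pow_mult[OF g0c, of 2 2] by simp
    then show ?thesis using p2 tt by simp
  qed
  have p3: "g0 [^] (3::int) = t \<otimes> g0"
    using int_pow_mult[OF g0c, of 2 1] p2 g0c by simp
  define Z where "Z = Z2pow m"
  have grpZ: "group Z" unfolding Z_def Z2pow_def by (intro product_group) simp
  have i01: "{0..<2::int} = {0,1}" by auto
  have carZ: "carrier Z = PiE {..<m} (\<lambda>_. {0,1})"
    unfolding Z_def Z2pow_def by (simp add: carrier_integer_mod_group i01)
  have mulZ: "x \<otimes>\<^bsub>Z\<^esub> y = (\<lambda>i\<in>{..<m}. (x i + y i) mod 2)" for x y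
    unfolding Z_def Z2pow_def by simp
  have oneZ: "\<one>\<^bsub>Z\<^esub> = (\<lambda>i\<in>{..<m}. 0)" unfolding Z_def Z2pow_def by simp
  have c01: "\<forall>i<m. v i \<in> {0,1}" if "v \<in> carrier Z" for v
    using PiE_mem[OF that[unfolded carZ]] by blast
  define W where "W = Z2pow_Z4 m"
  have WZ: "W = Z \<times>\<times> integer_mod_group 4" unfolding W_def Z_def Z2pow_Z4_def by simp
  have grpW: "group W" unfolding WZ by (intro DirProd_group grpZ) simp
  have carW: "carrier W = carrier Z \<times> {0..<4}" unfolding WZ by (simp add: carrier_integer_mod_group)
  define Phi where "Phi = (\<lambda>p. Fs G m g (fst p) \<otimes> g0 [^] (snd p :: int))"
  have Phic: "Phi p \<in> carrier G" for p unfolding Phi_def using Fs_closed gc g0c by blast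
  have hom: "Phi \<in> hom W G"
  proof (rule homI)
    fix x show "Phi x \<in> carrier G" by (rule Phic)
  next
    fix x y assume x: "x \<in> carrier W" and y: "y \<in> carrier W"
    obtain v a where xv: "x = (v, a)" by (cases x)
    obtain w b where yw: "y = (w, b)" by (cases y)
    have "x \<otimes>\<^bsub>W\<^esub> y = (v \<otimes>\<^bsub>Z\<^esub> w, (a + b) mod 4)" unfolding xv yw WZ by simp
    then have "Phi (x \<otimes>\<^bsub>W\<^esub> y) = Fs G m g (v \<otimes>\<^bsub>Z\<^esub> w) \<otimes> g0 [^] ((a + b) mod 4)"
      unfolding Phi_def by simp
    also have "Fs G m g (v \<otimes>\<^bsub>Z\<^esub> w) = Fs G m g (\<lambda>i. (v i + w i) mod 2)"
      unfolding mulZ using gc by (intro Fs_cong) auto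
    also have "\<dots> = Fs G m g v \<otimes> Fs G m g w"
      using gc el gH by (intro Fs_add) auto
    also have "g0 [^] ((a + b) mod 4) = g0 [^] a \<otimes> g0 [^] b"
      using pow_mod4[OF g0c p4] int_pow_mult[OF g0c] by simp
    finally show "Phi (x \<otimes>\<^bsub>W\<^esub> y) = Phi x \<otimes> Phi y"
      unfolding Phi_def xv yw using Fs_closed gc g0c by (simp add: m_ac)
  qed
  have gh: "group_hom W G Phi"
    unfolding group_hom_def group_hom_axioms_def using grpW hom is_group by simp
  have ker: "kernel W G Phi = {\<one>\<^bsub>W\<^esub>}"
  proof
    show "{\<one>\<^bsub>W\<^esub>} \<subseteq> kernel W G Phi" using group_hom.hom_one[OF gh] monoid.one_closed[OF group.is_monoid[OF grpW]] unfolding kernel_def by simp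
  next
    show "kernel W G Phi \<subseteq> {\<one>\<^bsub>W\<^esub>}"
    proof
      fix x assume "x \<in> kernel W G Phi"
      then have xW: "x \<in> carrier W" and x1: "Phi x = \<one>" unfolding kernel_def by auto
      obtain v a where xv: "x = (v, a)" by (cases x)
      have vZ: "v \<in> carrier Z" and a4: "a \<in> {0..<4}" using xW carW xv by auto
      have FH: "Fs G m g v \<in> H" using Fs_in[OF sub gH] .
      have Fc: "Fs G m g v \<in> carrier G" using FH Hc by blast
      have pc: "g0 [^] a \<in> carrier G" using g0c by simp
      have eq: "Fs G m g v \<otimes> g0 [^] a = \<one>" using x1 unfolding Phi_def xv by simp
      have "g0 [^] a = Fs G m g v"
      proof -
        have "g0 [^] a = (Fs G m g v \<otimes> Fs G m g v) \<otimes> g0 [^] a" using el FH pc by simp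
        also have "\<dots> = Fs G m g v \<otimes> (Fs G m g v \<otimes> g0 [^] a)" using Fc pc by (simp add: m_assoc)
        also have "\<dots> = Fs G m g v" using eq Fc by simp
        finally show ?thesis .
      qed
      then have pH: "g0 [^] a \<in> H" using FH by simp
      have a02: "a = 0 \<or> a = 2"
      proof -
        have "a = 0 \<or> a = 1 \<or> a = 2 \<or> a = 3" using a4 by auto
        moreover have "a \<noteq> 1" using pH g0H g0c by auto
        moreover have "a \<noteq> 3"
        proof
          assume "a = 3"
          then have "t \<otimes> g0 \<in> H" using pH p3 by simp
          then have "t \<otimes> (t \<otimes> g0) \<in> H" using tH sub by (simp add: subgroup.m_closed)
          moreover have "t \<otimes> (t \<otimes> g0) = g0" using tt tc g0c by (simp add: m_assoc[symmetric])
          ultimately show False using g0H by simp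
        qed
        ultimately show ?thesis by blast
      qed
      then have "Fs G m g v \<in> K" using \<open>g0 [^] a = Fs G m g v\<close> p2 unfolding K_def by auto
      then have v0: "\<forall>i<m. v i = 0" using P c01[OF vZ] unfolding indep_def by blast
      have "Fs G m g v = Fs G m g (\<lambda>_. 0)" using v0 gc by (intro Fs_cong) auto
      also have "\<dots> = \<one>" unfolding Fs_def by simp
      finally have "g0 [^] a = \<one>" using \<open>g0 [^] a = Fs G m g v\<close> by simp
      then have a0: "a = 0" using a02 p2 t1 by auto
      have "v = \<one>\<^bsub>Z\<^esub>"
      proof (rule ext)
        fix i show "v i = \<one>\<^bsub>Z\<^esub> i"
        proof (cases "i < m")
          case True then show ?thesis using v0 oneZ by simp
        next
          case False then show ?thesis using PiE_arb[OF vZ[unfolded carZ]] oneZ by simp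
        qed
      qed
      then show "x \<in> {\<one>\<^bsub>W\<^esub>}" using xv a0 unfolding WZ by simp
    qed
  qed
  have inj: "inj_on Phi (carrier W)" using group_hom.trivial_ker_imp_inj[OF gh ker] .
  have surj: "carrier G \<subseteq> Phi ` carrier W"
  proof
    fix x assume xc: "x \<in> carrier G"
    have rep: "\<exists>p\<in>carrier W. Phi p = h \<otimes> g0 [^] (c::int)" if hH: "h \<in> H" and c: "c \<in> {0,1}" for h c
    proof -
      obtain v k where v: "\<forall>i<m. v i \<in> {0,1}" and k: "k \<in> K" and hv: "h = Fs G m g v \<otimes> k"
        using span hH by blast
      define v' where "v' = restrict v {..<m}"
      have v'Z: "v' \<in> carrier Z" unfolding carZ v'_def using v by auto
      have Fv: "Fs G m g v' = Fs G m g v" unfolding v'_def using gc by (intro Fs_cong) auto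
      have Fc: "Fs G m g v \<in> carrier G" using Fs_closed gc by blast
      have "k = g0 [^] (0::int) \<or> k = g0 [^] (2::int)" using k p2 unfolding K_def by auto
      then obtain e where e: "e \<in> {0,2}" and ke: "k = g0 [^] (e::int)" by blast
      have "h \<otimes> g0 [^] c = Fs G m g v' \<otimes> g0 [^] (e + c)"
        unfolding hv ke Fv using Fc g0c by (simp add: int_pow_mult m_assoc)
      moreover have "(v', e + c) \<in> carrier W" using v'Z e c carW by auto
      ultimately show ?thesis unfolding Phi_def by force
    qed
    show "x \<in> Phi ` carrier W"
    proof (cases "x \<in> H")
      case True
      then obtain p where "p \<in> carrier W" "Phi p = x \<otimes> g0 [^] (0::int)" using rep by blast
      then show ?thesis using xc by force
    next
      case False
      then have "x \<in> C" using Ceq xc by simp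
      then obtain y where y: "y \<in> H" and xy: "x = g0 \<otimes> y" unfolding C_def by blast
      obtain p where "p \<in> carrier W" "Phi p = y \<otimes> g0 [^] (1::int)" using rep y by blast
      moreover have "y \<otimes> g0 [^] (1::int) = x" using xy y Hc g0c by (simp add: m_comm subsetD)
      ultimately show ?thesis by force
    qed
  qed
  have "Phi \<in> iso W G" unfolding iso_iff using hom inj surj Phic by auto
  then have "W \<cong> G" by (rule is_isoI)
  then have "G \<cong> W" using group.iso_sym[OF grpW] by blast
  then show ?thesis unfolding W_def by blast
qed


lemma alg_a: "x \<in> carrier G \<Longrightarrow> y \<in> carrier G \<Longrightarrow> x = inv (x \<otimes> y) \<Longrightarrow> y = inv (x \<otimes> x)"
proof -
  assume x: "x \<in> carrier G" and y: "y \<in> carrier G" and e: "x = inv (x \<otimes> y)"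
  have "x \<otimes> (x \<otimes> y) = \<one>" using e x y by (metis l_inv m_closed)
  then have "y \<otimes> (x \<otimes> x) = \<one>" using x y by (simp add: m_ac)
  then show ?thesis using x y by (metis inv_equality m_closed)
qed

lemma alg_b: "x \<in> carrier G \<Longrightarrow> y \<in> carrier G \<Longrightarrow> y = inv (x \<otimes> y) \<Longrightarrow> x = inv (y \<otimes> y)"
proof -
  assume x: "x \<in> carrier G" and y: "y \<in> carrier G" and e: "y = inv (x \<otimes> y)"
  have "y \<otimes> (x \<otimes> y) = \<one>" using e x y by (metis l_inv m_closed)
  then have "x \<otimes> (y \<otimes> y) = \<one>" using x y by (simp add: m_ac)
  then show ?thesis using x y by (metis inv_equality m_closed)
qed

lemma alg_c: "x \<in> carrier G \<Longrightarrow> y \<in> carrier G \<Longrightarrow> inv x \<otimes> inv (inv (x \<otimes> y)) = y"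
  by (simp add: m_assoc[symmetric])

lemma alg_d: "w \<in> carrier G \<Longrightarrow> inv w \<otimes> inv w = \<one> \<Longrightarrow> w \<otimes> w = \<one>"
proof -
  assume w: "w \<in> carrier G" and e: "inv w \<otimes> inv w = \<one>"
  have "inv (w \<otimes> w) = \<one>" using e w by (simp add: inv_mult)
  then have "inv (inv (w \<otimes> w)) = \<one>" by simp
  then show ?thesis using w by simp
qed


lemma main_count:
  assumes fin: "finite (carrier G)" and big: "100 \<le> order G"
    and Hdef: "H = {x \<in> carrier G. x \<otimes> x = \<one>}" and h3: "3 * card H \<le> order G"
  shows "\<exists>T :: 'a set set. real (card T) \<ge> real (order G) / 100 \<and>
       (\<forall>t\<in>T. \<forall>t'\<in>T. t \<noteq> t' \<longrightarrow> t \<inter> t' = {}) \<and>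
       (\<forall>t\<in>T. \<exists>x y z. t = {x, y, z} \<and> x \<noteq> y \<and> x \<noteq> z \<and> y \<noteq> z \<and>
          non_involution G x \<and> non_involution G y \<and> non_involution G z \<and>
          x \<otimes> y \<otimes> z = \<one>)"
proof -
  define n where "n = order G"
  define good where "good t \<longleftrightarrow> (\<exists>x y z. t = {x, y, z} \<and> x \<noteq> y \<and> x \<noteq> z \<and> y \<noteq> z \<and>
          non_involution G x \<and> non_involution G y \<and> non_involution G z \<and>
          x \<otimes> y \<otimes> z = \<one>)" for t
  define Fam where "Fam = {T. T \<subseteq> Pow (carrier G) \<and> (\<forall>t\<in>T. \<forall>t'\<in>T. t \<noteq> t' \<longrightarrow> t \<inter> t' = {}) \<and> (\<forall>t\<in>T. good t)}"
  have finFam: "finite Fam"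
  proof (rule finite_subset)
    show "Fam \<subseteq> Pow (Pow (carrier G))" unfolding Fam_def by blast
    show "finite (Pow (Pow (carrier G)))" using fin by simp
  qed
  have "{} \<in> Fam" unfolding Fam_def by simp
  define mx where "mx = Max (card ` Fam)"
  have "mx \<in> card ` Fam" unfolding mx_def using finFam \<open>{} \<in> Fam\<close> by (intro Max_in) auto
  then obtain T where TF: "T \<in> Fam" and cT: "card T = mx" by auto
  have maxT: "card T' \<le> card T" if "T' \<in> Fam" for T'
    unfolding cT mx_def using finFam that by simp
  have Tsub: "T \<subseteq> Pow (carrier G)" and Tdisj: "\<forall>t\<in>T. \<forall>t'\<in>T. t \<noteq> t' \<longrightarrow> t \<inter> t' = {}"
    and Tgood: "\<forall>t\<in>T. good t" using TF unfolding Fam_def by auto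
  have finT: "finite T" using Tsub fin by (meson finite_Pow_iff finite_subset)
  have card3: "card t \<le> 3" if gt: "good t" for t
  proof -
    obtain x y z where "t = {x,y,z}" using gt unfolding good_def by blast
    then show ?thesis by (simp add: card_insert_le_m1)
  qed
  have large: "n \<le> 100 * card T"
  proof (rule ccontr)
    assume "\<not> n \<le> 100 * card T"
    then have small: "100 * card T < n" by simp
    define U where "U = \<Union>T"
    define u where "u = card U"
    have "u \<le> sum card T" unfolding u_def U_def by (rule card_Union_le_sum_card)
    also have "\<dots> \<le> card T * 3" using card3 Tgood sum_bounded_above[of T card 3] by simp
    finally have u3: "u \<le> 3 * card T" by simp
    have Uc: "U \<subseteq> carrier G" unfolding U_def using Tsub by blast
    have finU: "finite U" using Uc fin finite_subset by blast
    have sub: "subgroup H G" unfolding Hdef by (rule invs_subgroup)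
    have Hc: "H \<subseteq> carrier G" unfolding Hdef by blast
    have finH: "finite H" using Hc fin finite_subset by blast
    define h where "h = card H"
    define N where "N = carrier G - H"
    have Nc: "N \<subseteq> carrier G" unfolding N_def by blast
    have finN: "finite N" using Nc fin finite_subset by blast
    have cN: "card N = n - h" unfolding N_def n_def h_def order_def using card_Diff_subset[OF finH Hc] .
    have memN: "w \<in> N \<longleftrightarrow> w \<in> carrier G \<and> w \<otimes> w \<noteq> \<one>" for w unfolding N_def Hdef by auto
    define S where "S = Sigma N (\<lambda>x. {y \<in> N. x \<otimes> y \<in> N})"
    have sec: "n - 2 * h \<le> card {y \<in> N. x \<otimes> y \<in> N}" if xN: "x \<in> N" for x
    proof -
      have xc: "x \<in> carrier G" using xN Nc by blast
      define XX where "XX = H \<union> (\<lambda>k. inv x \<otimes> k) ` H"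
      have cXX: "card XX \<le> h + h" unfolding XX_def h_def
        by (meson card_Un_le card_image_le finH add_left_mono order_trans)
      have finXX: "finite XX" unfolding XX_def using finH by simp
      have "carrier G - XX \<subseteq> {y \<in> N. x \<otimes> y \<in> N}"
      proof
        fix y assume y: "y \<in> carrier G - XX"
        then have yc: "y \<in> carrier G" and yH: "y \<notin> H" and yim: "y \<notin> (\<lambda>k. inv x \<otimes> k) ` H"
          unfolding XX_def by auto
        have "x \<otimes> y \<notin> H"
        proof
          assume "x \<otimes> y \<in> H"
          moreover have "inv x \<otimes> (x \<otimes> y) = y" using xc yc by (simp add: m_assoc[symmetric])
          ultimately show False using yim by (metis image_eqI)
        qed
        then show "y \<in> {y \<in> N. x \<otimes> y \<in> N}" using yc yH xc unfolding N_def by auto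
      qed
      then have "card (carrier G - XX) \<le> card {y \<in> N. x \<otimes> y \<in> N}"
        by (intro card_mono) (use finN in auto)
      moreover have "n - card XX \<le> card (carrier G - XX)" unfolding n_def order_def
        using diff_card_le_card_Diff[OF finXX] .
      ultimately show ?thesis using cXX by linarith
    qed
    have "card S = (\<Sum>x\<in>N. card {y \<in> N. x \<otimes> y \<in> N})" unfolding S_def
      using finN by (intro card_SigmaI) auto
    moreover have "card N * (n - 2 * h) \<le> (\<Sum>x\<in>N. card {y \<in> N. x \<otimes> y \<in> N})"
      using sum_bounded_below[of N "n - 2*h" "\<lambda>x. card {y \<in> N. x \<otimes> y \<in> N}"] sec by simp
    ultimately have cS: "(n - h) * (n - 2 * h) \<le> card S" using cN by simp
    define B1 where "B1 = U \<times> carrier G"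
    define B2 where "B2 = carrier G \<times> U"
    define B3 where "B3 = (\<lambda>(x, w). (x, inv x \<otimes> inv w)) ` (carrier G \<times> U)"
    define B4 where "B4 = (\<lambda>x. (x, x)) ` carrier G"
    define B5 where "B5 = (\<lambda>x. (x, inv (x \<otimes> x))) ` carrier G"
    define B6 where "B6 = (\<lambda>y. (inv (y \<otimes> y), y)) ` carrier G"
    define B where "B = B1 \<union> B2 \<union> B3 \<union> B4 \<union> B5 \<union> B6"
    have finB: "finite B" unfolding B_def B1_def B2_def B3_def B4_def B5_def B6_def using fin finU by simp
    have c1: "card B1 = u * n" unfolding B1_def u_def n_def order_def by (simp add: card_cartesian_product)
    have c2: "card B2 = n * u" unfolding B2_def u_def n_def order_def by (simp add: card_cartesian_product)
    have c3: "card B3 \<le> n * u" unfolding B3_def using card_image_le[of "carrier G \<times> U"] fin finU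
      by (simp add: card_cartesian_product u_def n_def order_def)
    have c4: "card B4 \<le> n" unfolding B4_def n_def order_def using fin by (rule card_image_le)
    have c5: "card B5 \<le> n" unfolding B5_def n_def order_def using fin by (rule card_image_le)
    have c6: "card B6 \<le> n" unfolding B6_def n_def order_def using fin by (rule card_image_le)
    have "card B \<le> card B1 + card B2 + card B3 + card B4 + card B5 + card B6"
      unfolding B_def by (meson card_Un_le add_right_mono order_trans)
    then have cB: "card B \<le> 3 * (u * n) + 3 * n" using c1 c2 c3 c4 c5 c6 by (simp add: mult.commute)
    have npos: "0 < n" using big n_def by simp
    have f1: "100 * (u * n) < 3 * (n * n)"
    proof -
      have "100 * u < 3 * n" using u3 small by linarith
      then have "(100 * u) * n < (3 * n) * n" using npos by simp
      then show ?thesis by (simp add: mult.assoc)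
    qed
    have f2: "100 * n \<le> n * n" using big n_def by simp
    have f3: "2 * (n * n) \<le> 9 * ((n - h) * (n - 2 * h))"
    proof -
      have a: "2 * n \<le> 3 * (n - h)" using h3 n_def h_def by linarith
      have b: "n \<le> 3 * (n - 2 * h)" using h3 n_def h_def by linarith
      have "(2 * n) * n \<le> (3 * (n - h)) * (3 * (n - 2 * h))" using mult_le_mono[OF a b] .
      then show ?thesis by (simp add: algebra_simps)
    qed
    have "card B < card S" using cB cS f1 f2 f3 by linarith
    then have "\<not> S \<subseteq> B" using card_mono[OF finB] by (meson leD)
    then obtain x y where xyS: "(x, y) \<in> S" and xyB: "(x, y) \<notin> B" by auto
    have xN: "x \<in> N" and yN: "y \<in> N" and xyN: "x \<otimes> y \<in> N" using xyS unfolding S_def by auto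
    have xc: "x \<in> carrier G" and yc: "y \<in> carrier G" using xN yN Nc by auto
    define z where "z = inv (x \<otimes> y)"
    have zc: "z \<in> carrier G" unfolding z_def using xc yc by simp
    have xU: "x \<notin> U" using xyB yc unfolding B_def B1_def by auto
    have yU: "y \<notin> U" using xyB xc unfolding B_def B2_def by auto
    have zU: "z \<notin> U"
    proof
      assume "z \<in> U"
      then have "(\<lambda>(x, w). (x, inv x \<otimes> inv w)) (x, z) \<in> B3" unfolding B3_def using xc by blast
      then have "(x, y) \<in> B3" using alg_c[OF xc yc] unfolding z_def by simp
      then show False using xyB unfolding B_def by blast
    qed
    have xy: "x \<noteq> y" using xyB xc unfolding B_def B4_def by auto
    have xz: "x \<noteq> z"
    proof
      assume "x = z"
      then have "y = inv (x \<otimes> x)" using alg_a[OF xc yc] unfolding z_def by simp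
      then have "(x, y) \<in> B5" unfolding B5_def using xc by blast
      then show False using xyB unfolding B_def by blast
    qed
    have yz: "y \<noteq> z"
    proof
      assume "y = z"
      then have "x = inv (y \<otimes> y)" using alg_b[OF xc yc] unfolding z_def by simp
      then have "(x, y) \<in> B6" unfolding B6_def using yc by blast
      then show False using xyB unfolding B_def by blast
    qed
    have zN: "z \<in> N"
    proof -
      have "z \<otimes> z \<noteq> \<one>"
      proof
        assume "z \<otimes> z = \<one>"
        then have "(x \<otimes> y) \<otimes> (x \<otimes> y) = \<one>" using alg_d[of "x \<otimes> y"] xc yc unfolding z_def by simp
        then show False using xyN memN by simp
      qed
      then show ?thesis using zc memN by simp
    qed
    define t where "t = {x, y, z}"
    have tgood: "good t" unfolding good_def t_def
    proof (intro exI conjI)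
      show "non_involution G x" "non_involution G y" "non_involution G z"
        using xN yN zN memN unfolding non_involution_def by auto
      show "x \<otimes> y \<otimes> z = \<one>" unfolding z_def using xc yc by simp
    qed (use xy xz yz in auto)
    have tU: "t \<inter> U = {}" unfolding t_def using xU yU zU by auto
    have tc: "t \<subseteq> carrier G" unfolding t_def using xc yc zc by auto
    have tT: "t \<notin> T" using tU unfolding U_def t_def by blast
    have "insert t T \<in> Fam"
      unfolding Fam_def
    proof (intro CollectI conjI ballI impI)
      show "insert t T \<subseteq> Pow (carrier G)" using Tsub tc by auto
    next
      fix s s' assume s: "s \<in> insert t T" and s': "s' \<in> insert t T" and ne: "s \<noteq> s'"
      show "s \<inter> s' = {}"
      proof (cases "s = t")
        case True
        then have "s' \<in> T" using s' ne by auto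
        then have "s' \<subseteq> U" unfolding U_def by blast
        then show ?thesis using True tU by blast
      next
        case False
        then have sT: "s \<in> T" using s by auto
        show ?thesis
        proof (cases "s' = t")
          case True
          have "s \<subseteq> U" using sT unfolding U_def by blast
          then show ?thesis using True tU by blast
        next
          case False
          then show ?thesis using sT s' ne Tdisj by auto
        qed
      qed
    next
      fix s assume "s \<in> insert t T"
      then show "good s" using tgood Tgood by auto
    qed
    then have "card (insert t T) \<le> card T" by (rule maxT)
    then show False using finT tT by simp
  qed
  show ?thesis
  proof (intro exI conjI)
    show "real (order G) / 100 \<le> real (card T)" using large unfolding n_def by simp
    show "\<forall>t\<in>T. \<forall>t'\<in>T. t \<noteq> t' \<longrightarrow> t \<inter> t' = {}" by (rule Tdisj)
    show "\<forall>t\<in>T. \<exists>x y z. t = {x, y, z} \<and> x \<noteq> y \<and> x \<noteq> z \<and> y \<noteq> z \<and>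
          non_involution G x \<and> non_involution G y \<and> non_involution G z \<and> x \<otimes> y \<otimes> z = \<one>"
      using Tgood unfolding good_def by blast
  qed
qed


end

theorem lemma6p32:
  shows "\<exists>n0::nat. \<forall>G :: nat monoid.
    comm_group G \<and> finite (carrier G) \<and> order G \<ge> n0 \<and>
    (\<forall>m. \<not> G \<cong> Z2pow m) \<and> (\<forall>m. \<not> G \<cong> Z2pow_Z4 m) \<longrightarrow>
    (\<exists>T :: nat set set.
       real (card T) \<ge> real (order G) / 100 \<and>
       (\<forall>t\<in>T. \<forall>t'\<in>T. t \<noteq> t' \<longrightarrow> t \<inter> t' = {}) \<and>
       (\<forall>t\<in>T. \<exists>x y z. t = {x, y, z} \<and> x \<noteq> y \<and> x \<noteq> z \<and> y \<noteq> z \<and>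
          non_involution G x \<and> non_involution G y \<and> non_involution G z \<and>
          x \<otimes>\<^bsub>G\<^esub> y \<otimes>\<^bsub>G\<^esub> z = \<one>\<^bsub>G\<^esub>))"
proof (intro exI[of _ 100] allI impI)
  fix G :: "nat monoid"
  assume A: "comm_group G \<and> finite (carrier G) \<and> order G \<ge> 100 \<and>
    (\<forall>m. \<not> G \<cong> Z2pow m) \<and> (\<forall>m. \<not> G \<cong> Z2pow_Z4 m)"
  then have cg: "comm_group G" and fin: "finite (carrier G)" and big: "100 \<le> order G"
    and n1: "\<forall>m. \<not> G \<cong> Z2pow m" and n2: "\<forall>m. \<not> G \<cong> Z2pow_Z4 m" by auto
  interpret comm_group G by (rule cg)
  define H where "H = {x \<in> carrier G. x \<otimes>\<^bsub>G\<^esub> x = \<one>\<^bsub>G\<^esub>}"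
  have sub: "subgroup H G" unfolding H_def by (rule invs_subgroup)
  have Hc: "H \<subseteq> carrier G" unfolding H_def by blast
  have lag: "card (rcosets\<^bsub>G\<^esub> H) * card H = order G" by (rule lagrange[OF sub])
  have h3: "3 * card H \<le> order G"
  proof -
    define q where "q = card (rcosets\<^bsub>G\<^esub> H)"
    have lq: "q * card H = order G" using lag unfolding q_def .
    have "q \<noteq> 0"
    proof
      assume "q = 0"
      then have "order G = 0" using lq by simp
      then show False using big by simp
    qed
    moreover have "q \<noteq> 1"
    proof
      assume "q = 1"
      then have "card H = card (carrier G)" using lq unfolding order_def by simp
      then have "H = carrier G" using Hc fin by (intro card_subset_eq) auto
      then have "\<forall>x\<in>carrier G. x \<otimes>\<^bsub>G\<^esub> x = \<one>\<^bsub>G\<^esub>" unfolding H_def by auto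
      then show False using elem_iso[OF fin] n1 by blast
    qed
    moreover have "q \<noteq> 2"
    proof
      assume "q = 2"
      then have "2 * card H = order G" using lq by simp
      then show False using z4_iso[OF fin H_def] n2 by blast
    qed
    ultimately have "3 \<le> q" by linarith
    then have "3 * card H \<le> q * card H" by simp
    then show ?thesis using lq by simp
  qed
  show "\<exists>T :: nat set set.
       real (card T) \<ge> real (order G) / 100 \<and>
       (\<forall>t\<in>T. \<forall>t'\<in>T. t \<noteq> t' \<longrightarrow> t \<inter> t' = {}) \<and>
       (\<forall>t\<in>T. \<exists>x y z. t = {x, y, z} \<and> x \<noteq> y \<and> x \<noteq> z \<and> y \<noteq> z \<and>
          non_involution G x \<and> non_involution G y \<and> non_involution G z \<and>
          x \<otimes>\<^bsub>G\<^esub> y \<otimes>\<^bsub>G\<^esub> z = \<one>\<^bsub>G\<^esub>)"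
    by (rule main_count[OF fin big H_def h3])
qed

end
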